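(* Let $A:=\{u_i\mid i\in I\}\subseteq\mathbb{R}^n$ be an indexed family with $\operatorname{card}I\ge n+1$ and $o\notin\operatorname{conv}A$. Then there exist nonempty sets $I_1,I_2\subseteq I$ with $I_1\cap I_2=\emptyset$, $I_1\cup I_2=I$ and $\operatorname{conv}A_1\cap\big((0,1]\operatorname{conv}A_2\big)\neq\emptyset$, where $A_k:=\{u_i\mid i\in I_k\}$ for $k\in\{1,2\}$.
   Context: $n\ge2$; $o$ denotes the zero vector of $\mathbb{R}^n$; $(0,1]B:=\{tb\mid t\in(0,1],b\in B\}$; $\operatorname{conv}$ denotes convex hull. *)

theory Defs
  imports "HOL-Analysis.Analysis"
begin

definition scale_0_1 :: "'a::real_vector set \<Rightarrow> 'a set" where
  "scale_0_1 B = {t *\<^sub>R b | t b. t \<in> {0<..1} \<and> b \<in> B}"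

end

theory Submission
  imports Defs
begin

lemma core:
  fixes X Y :: "'a::real_vector set"
  assumes fX: "finite X" and fY: "finite Y"
    and dpos: "\<forall>v\<in>X. d v > 0" and epos: "\<forall>v\<in>Y. e v > 0"
    and Xne: "X \<noteq> {}" and Yne: "Y \<noteq> {}"
    and eq: "(\<Sum>v\<in>X. d v *\<^sub>R v) = (\<Sum>v\<in>Y. e v *\<^sub>R v)"
    and le: "sum e Y \<le> sum d X"
  shows "convex hull X \<inter> scale_0_1 (convex hull Y) \<noteq> {}"
proof -
  define a where "a = sum d X"
  define b where "b = sum e Y"
  have a: "a > 0" unfolding a_def using fX Xne dpos by (simp add: sum_pos)
  have b: "b > 0" unfolding b_def using fY Yne epos by (simp add: sum_pos)
  define x where "x = (\<Sum>v\<in>X. (d v / a) *\<^sub>R v)"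
  define y where "y = (\<Sum>v\<in>Y. (e v / b) *\<^sub>R v)"
  have xin: "x \<in> convex hull X"
    unfolding convex_hull_finite[OF fX] x_def
  proof (intro CollectI exI[of _ "\<lambda>v. d v / a"] conjI)
    show "\<forall>v\<in>X. 0 \<le> d v / a" using dpos a by auto
    show "(\<Sum>v\<in>X. d v / a) = 1" using a by (simp add: sum_divide_distrib[symmetric] a_def)
  qed simp
  have yin: "y \<in> convex hull Y"
    unfolding convex_hull_finite[OF fY] y_def
  proof (intro CollectI exI[of _ "\<lambda>v. e v / b"] conjI)
    show "\<forall>v\<in>Y. 0 \<le> e v / b" using epos b by auto
    show "(\<Sum>v\<in>Y. e v / b) = 1" using b by (simp add: sum_divide_distrib[symmetric] b_def)
  qed simp
  have "x = (1/a) *\<^sub>R (\<Sum>v\<in>X. d v *\<^sub>R v)"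
    unfolding x_def scaleR_sum_right by (simp add: divide_inverse mult.commute)
  also have "\<dots> = (1/a) *\<^sub>R (\<Sum>v\<in>Y. e v *\<^sub>R v)" using eq by simp
  also have "\<dots> = (b/a) *\<^sub>R y"
    unfolding y_def scaleR_sum_right scaleR_scaleR using b by (intro sum.cong) (auto simp: field_simps)
  finally have xy: "x = (b/a) *\<^sub>R y" .
  have "b/a \<in> {0<..1}" using a b le by (simp add: a_def b_def)
  hence "x \<in> scale_0_1 (convex hull Y)" unfolding scale_0_1_def using xy yin by blast
  thus ?thesis using xin by blast
qed

lemma neg_exists:
  fixes T :: "'a::real_vector set"
  assumes fT: "finite T" and z: "0 \<notin> convex hull T"
    and s: "(\<Sum>v\<in>T. c v *\<^sub>R v) = 0" and nz: "\<exists>v\<in>T. c v \<noteq> 0"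
  shows "\<exists>v\<in>T. c v < 0"
proof (rule ccontr)
  assume "\<not> ?thesis"
  hence nn: "\<forall>v\<in>T. c v \<ge> 0" by auto
  from nz obtain w where w: "w \<in> T" "c w \<noteq> 0" by auto
  have "sum c T > 0"
  proof -
    have "c w \<le> sum c T" using member_le_sum[of w T c] w nn fT by auto
    moreover have "c w > 0" using w nn by force
    ultimately show ?thesis by simp
  qed
  hence "0 \<in> convex hull T"
    unfolding convex_hull_finite[OF fT]
  proof (intro CollectI exI[of _ "\<lambda>v. c v / sum c T"] conjI)
    show "\<forall>v\<in>T. 0 \<le> c v / sum c T" using nn \<open>sum c T > 0\<close> by auto
    show "(\<Sum>v\<in>T. c v / sum c T) = 1" using \<open>sum c T > 0\<close>
      by (simp add: sum_divide_distrib[symmetric])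
    show "(\<Sum>v\<in>T. (c v / sum c T) *\<^sub>R v) = 0"
    proof -
      have "(\<Sum>v\<in>T. (c v / sum c T) *\<^sub>R v) = (1 / sum c T) *\<^sub>R (\<Sum>v\<in>T. c v *\<^sub>R v)"
        unfolding scaleR_sum_right by (simp add: divide_inverse mult.commute)
      thus ?thesis using s by simp
    qed
  qed
  with z show False by blast
qed

lemma scale_mono: "A \<subseteq> B \<Longrightarrow> scale_0_1 A \<subseteq> scale_0_1 B"
  unfolding scale_0_1_def by blast

theorem mainTheorem9:
  fixes u :: "'i \<Rightarrow> real ^ 'n" and I :: "'i set"
  assumes "CARD('n) \<ge> 2"
    and "infinite I \<or> card I \<ge> CARD('n) + 1"
    and "0 \<notin> convex hull (u ` I)"
  shows "\<exists>I1 I2. I1 \<noteq> {} \<and> I2 \<noteq> {} \<and> I1 \<subseteq> I \<and> I2 \<subseteq> I \<and>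
           I1 \<inter> I2 = {} \<and> I1 \<union> I2 = I \<and>
           convex hull (u ` I1) \<inter> scale_0_1 (convex hull (u ` I2)) \<noteq> {}"
proof (cases "inj_on u I")
  case False
  then obtain i j where ij: "i \<in> I" "j \<in> I" "i \<noteq> j" "u i = u j"
    unfolding inj_on_def by blast
  have "u i \<in> convex hull (u ` (I - {j}))"
    using ij by (intro hull_inc) (metis DiffI image_eqI singletonD)
  moreover have "u i \<in> scale_0_1 (convex hull (u ` {j}))"
    unfolding scale_0_1_def using ij
    by (intro CollectI exI[of _ 1] exI[of _ "u j"]) (auto intro: hull_inc)
  ultimately show ?thesis using ij
    by (intro exI[of _ "I - {j}"] exI[of _ "{j}"]) auto
next
  case True
  have "\<exists>S. finite S \<and> card S = CARD('n) + 1 \<and> S \<subseteq> u ` I"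
  proof (cases "finite I")
    case True
    with assms(2) have "CARD('n) + 1 \<le> card (u ` I)"
      using \<open>inj_on u I\<close> by (simp add: card_image)
    then obtain S where "S \<subseteq> u ` I" "card S = CARD('n) + 1" "finite S"
      by (rule obtain_subset_with_card_n)
    thus ?thesis by blast
  next
    case False
    hence "infinite (u ` I)" using \<open>inj_on u I\<close> finite_image_iff by blast
    thus ?thesis using infinite_arbitrarily_large by blast
  qed
  then obtain S where S: "finite S" "card S = CARD('n) + 1" "S \<subseteq> u ` I" by blast
  have "dependent S" by (rule dependent_biggerset) (use S in simp)
  then obtain T c where T: "finite T" "T \<subseteq> S" "(\<Sum>v\<in>T. c v *\<^sub>R v) = 0" "\<exists>v\<in>T. c v \<noteq> 0"
    unfolding dependent_explicit by blast
  have TI: "T \<subseteq> u ` I" using T S by blast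
  have z: "0 \<notin> convex hull T" using assms(3) hull_mono[OF TI] by blast
  define P where "P = {v\<in>T. c v > 0}"
  define N where "N = {v\<in>T. c v < 0}"
  have "\<exists>v\<in>T. c v < 0" using neg_exists[OF T(1) z T(3) T(4)] .
  hence Nne: "N \<noteq> {}" unfolding N_def by auto
  have "\<exists>v\<in>T. - c v < 0"
    using neg_exists[OF T(1) z, of "\<lambda>v. - c v"] T(3,4)
    by (simp add: sum_negf)
  hence Pne: "P \<noteq> {}" unfolding P_def by auto
  have fP: "finite P" and fN: "finite N" using T(1) unfolding P_def N_def by auto
  have PN: "P \<inter> N = {}" unfolding P_def N_def by auto
  have "(\<Sum>v\<in>T. c v *\<^sub>R v) = (\<Sum>v\<in>P. c v *\<^sub>R v) + (\<Sum>v\<in>N. c v *\<^sub>R v) + (\<Sum>v\<in>{v\<in>T. c v = 0}. c v *\<^sub>R v)"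
  proof -
    have "T = P \<union> N \<union> {v\<in>T. c v = 0}" unfolding P_def N_def by auto
    moreover have "(\<Sum>v\<in>P \<union> N \<union> {v\<in>T. c v = 0}. c v *\<^sub>R v) =
       (\<Sum>v\<in>P. c v *\<^sub>R v) + (\<Sum>v\<in>N. c v *\<^sub>R v) + (\<Sum>v\<in>{v\<in>T. c v = 0}. c v *\<^sub>R v)"
    proof -
      have f0: "finite {v\<in>T. c v = 0}" using T(1) by auto
      have d: "(P \<union> N) \<inter> {v\<in>T. c v = 0} = {}" unfolding P_def N_def by auto
      show ?thesis
        using sum.union_disjoint[OF finite_UnI[OF fP fN] f0 d, of "\<lambda>v. c v *\<^sub>R v"]
              sum.union_disjoint[OF fP fN PN, of "\<lambda>v. c v *\<^sub>R v"] by simp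
    qed
    ultimately show ?thesis by metis
  qed
  moreover have "(\<Sum>v\<in>{v\<in>T. c v = 0}. c v *\<^sub>R v) = 0" by (rule sum.neutral) simp
  ultimately have eq: "(\<Sum>v\<in>P. c v *\<^sub>R v) = (\<Sum>v\<in>N. (- c v) *\<^sub>R v)"
    using T(3) by (simp add: sum_negf eq_neg_iff_add_eq_0)
  have "\<exists>X Y. X \<subseteq> T \<and> Y \<subseteq> T \<and> X \<inter> Y = {} \<and> X \<noteq> {} \<and> Y \<noteq> {} \<and>
      convex hull X \<inter> scale_0_1 (convex hull Y) \<noteq> {}"
  proof (cases "(\<Sum>v\<in>N. - c v) \<le> sum c P")
    case True
    have "convex hull P \<inter> scale_0_1 (convex hull N) \<noteq> {}"
      by (rule core[OF fP fN _ _ Pne Nne eq True]) (auto simp: P_def N_def)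
    thus ?thesis using PN Pne Nne by (intro exI[of _ P] exI[of _ N]) (auto simp: P_def N_def)
  next
    case False
    have "convex hull N \<inter> scale_0_1 (convex hull P) \<noteq> {}"
      by (rule core[OF fN fP _ _ Nne Pne eq[symmetric]]) (use False in \<open>auto simp: P_def N_def\<close>)
    thus ?thesis using PN Pne Nne by (intro exI[of _ N] exI[of _ P]) (auto simp: P_def N_def)
  qed
  then obtain X Y where XY: "X \<subseteq> T" "Y \<subseteq> T" "X \<inter> Y = {}" "X \<noteq> {}" "Y \<noteq> {}"
      "convex hull X \<inter> scale_0_1 (convex hull Y) \<noteq> {}" by blast
  define I2 where "I2 = {i\<in>I. u i \<in> Y}"
  define I1 where "I1 = I - I2"
  have Y2: "Y \<subseteq> u ` I2" using XY TI unfolding I2_def by blast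
  have X1: "X \<subseteq> u ` I1" using XY TI unfolding I1_def I2_def by blast
  have "convex hull X \<subseteq> convex hull (u ` I1)" by (rule hull_mono[OF X1])
  moreover have "scale_0_1 (convex hull Y) \<subseteq> scale_0_1 (convex hull (u ` I2))"
    by (rule scale_mono[OF hull_mono[OF Y2]])
  ultimately have "convex hull (u ` I1) \<inter> scale_0_1 (convex hull (u ` I2)) \<noteq> {}"
    using XY(6) by blast
  moreover have "I1 \<noteq> {}" using X1 XY(4) by auto
  moreover have "I2 \<noteq> {}" using Y2 XY(5) by auto
  ultimately show ?thesis
    by (intro exI[of _ I1] exI[of _ I2]) (auto simp: I1_def I2_def)
qed

end
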